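(* There is $R_0$ such that the following holds for $R\ge R_0$ with $R^2\in\mathbb{Z}$. Let $\mathcal{E}=\mathbb{Z}^3\cap\{x:|x|=R\}$ and let $\mathcal{G}$ be the graph on the vertex set $\mathcal{E}$ in which $m,n\in\mathcal{E}$ are joined when $|m-n|<R^{1/5}$. Then each connected component of $\mathcal{G}$ is contained in an affine plane of $\mathbb{R}^3$. *)

theory Defs
  imports "HOL-Analysis.Analysis"
begin

definition sphere_lattice :: "real \<Rightarrow> (real^3) set" where
  "sphere_lattice R = {x. (\<forall>i. x $ i \<in> \<int>) \<and> norm x = R}"

definition close_graph :: "real \<Rightarrow> real^3 \<Rightarrow> real^3 \<Rightarrow> bool" where
  "close_graph R m n \<longleftrightarrow> m \<in> sphere_lattice R \<and> n \<in> sphere_lattice R \<and> m \<noteq> n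
     \<and> norm (m - n) < R powr (1/5)"

definition component :: "real \<Rightarrow> real^3 \<Rightarrow> (real^3) set" where
  "component R m = {n. (close_graph R)\<^sup>*\<^sup>* m n}"

end

theory Submission imports Defs begin
lemma triple_ident: fixes p u v w :: "real^3"
  shows "(u \<bullet> (cross3 v w)) *\<^sub>R p = (p \<bullet> u) *\<^sub>R (cross3 v w) + (p \<bullet> v) *\<^sub>R (cross3 w u) + (p \<bullet> w) *\<^sub>R (cross3 u v)"
  by (simp add: cross3_simps forall_3) 
lemma gram_ident: fixes u v w :: "real^3"
  shows "((cross3 u v) \<bullet> (cross3 u v)) *\<^sub>R w = ((w \<bullet> u)*(v \<bullet> v) - (w \<bullet> v)*(u \<bullet> v)) *\<^sub>R u
     + ((w \<bullet> v)*(u \<bullet> u) - (w \<bullet> u)*(u \<bullet> v)) *\<^sub>R v + (w \<bullet> (cross3 u v)) *\<^sub>R (cross3 u v)"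
  by (simp add: cross3_simps forall_3) 
lemma cyc: fixes u v w :: "real^3" shows "u \<bullet> (cross3 v w) = w \<bullet> (cross3 u v)"
  by (simp add: cross3_simps)
lemma triple_int: fixes u v w :: "real^3"
  assumes "\<forall>i. u$i \<in> \<int>" "\<forall>i. v$i \<in> \<int>" "\<forall>i. w$i \<in> \<int>"
  shows "u \<bullet> (cross3 v w) \<in> \<int>"
  using assms by (simp add: cross3_def inner_vec_def sum_3 vector_def) 

lemma norm_cross_le: "norm (cross3 x y) \<le> norm x * norm y"
proof -
  have "(norm (cross3 x y))^2 \<le> (norm x * norm y)^2"
    using norm_cross_dot[of x y] zero_le_power2[of "x \<bullet> y"] by linarith
  thus ?thesis by (rule power2_le_imp_le) simp
qed

lemma dot_half: fixes p q :: "real^3"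
  assumes "norm p = R" "norm q = R"
  shows "p \<bullet> (q - p) = (- ((norm (q - p))^2)) / 2"
proof -
  have pp: "p \<bullet> p = R^2" "q \<bullet> q = R^2" using power2_norm_eq_inner[of p] power2_norm_eq_inner[of q] assms by auto
  have "(norm (q - p))^2 = (q - p) \<bullet> (q - p)" by (rule power2_norm_eq_inner)
  also have "\<dots> = q \<bullet> q - 2 * (p \<bullet> q) + p \<bullet> p"
    by (simp add: inner_diff_left inner_diff_right inner_commute[of q p] algebra_simps)
  finally have a: "(norm (q - p))^2 = q \<bullet> q - 2 * (p \<bullet> q) + p \<bullet> p" .
  have b: "p \<bullet> (q - p) = p \<bullet> q - p \<bullet> p" by (simp add: inner_diff_right)
  show ?thesis using a b pp by (simp add: field_simps)
qed

lemma K: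
  fixes p0 p1 p2 p3 :: "real^3"
  assumes s: "p0 \<in> sphere_lattice R" "p1 \<in> sphere_lattice R" "p2 \<in> sphere_lattice R" "p3 \<in> sphere_lattice R"
    and d: "norm (p1 - p0) < r" "norm (p2 - p0) < r" "norm (p3 - p0) < r"
    and big: "3 * r^4 < 2 * R"
  shows "(p1 - p0) \<bullet> cross3 (p2 - p0) (p3 - p0) = 0"
proof -
  define u v w where "u = p1 - p0" "v = p2 - p0" "w = p3 - p0"
  define T where "T = u \<bullet> cross3 v w"
  have nR: "norm p0 = R" "norm p1 = R" "norm p2 = R" "norm p3 = R"
    using s by (auto simp: sphere_lattice_def)
  have ints: "\<forall>i. p0$i \<in> \<int>" "\<forall>i. p1$i \<in> \<int>" "\<forall>i. p2$i \<in> \<int>" "\<forall>i. p3$i \<in> \<int>"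
    using s by (auto simp: sphere_lattice_def)
  have "T \<in> \<int>" unfolding T_def u_v_w_def
    by (rule triple_int) (use ints in auto)
  have r0: "r > 0" using d(1) by (smt (verit) norm_ge_zero)
  have R0: "R > 0" using big r0 by (smt (verit) zero_less_power)
  have nu: "norm u \<le> r" "norm v \<le> r" "norm w \<le> r" using d u_v_w_def by auto
  have du: "\<bar>p0 \<bullet> u\<bar> = (norm u)^2/2" "\<bar>p0 \<bullet> v\<bar> = (norm v)^2/2" "\<bar>p0 \<bullet> w\<bar> = (norm w)^2/2"
    using dot_half[OF nR(1) nR(2)] dot_half[OF nR(1) nR(3)] dot_half[OF nR(1) nR(4)] u_v_w_def by auto
  have sq: "(norm u)^2 \<le> r^2" "(norm v)^2 \<le> r^2" "(norm w)^2 \<le> r^2"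
    using nu by (auto intro: power_mono)
  have c1: "norm (cross3 v w) \<le> r*r"
    by (rule order_trans[OF norm_cross_le], rule mult_mono) (use nu r0 in auto)
  have c2: "norm (cross3 w u) \<le> r*r"
    by (rule order_trans[OF norm_cross_le], rule mult_mono) (use nu r0 in auto)
  have c3: "norm (cross3 u v) \<le> r*r"
    by (rule order_trans[OF norm_cross_le], rule mult_mono) (use nu r0 in auto)
  note c = c1 c2 c3
  have t1: "\<bar>p0 \<bullet> u\<bar> * norm (cross3 v w) \<le> r^2/2 * (r*r)"
    using du sq c by (intro mult_mono) auto
  have t2: "\<bar>p0 \<bullet> v\<bar> * norm (cross3 w u) \<le> r^2/2 * (r*r)"
    using du sq c by (intro mult_mono) auto
  have t3: "\<bar>p0 \<bullet> w\<bar> * norm (cross3 u v) \<le> r^2/2 * (r*r)"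
    using du sq c by (intro mult_mono) auto
  have "\<bar>T\<bar> * R = norm (T *\<^sub>R p0)" using nR by simp
  also have "\<dots> = norm ((p0 \<bullet> u) *\<^sub>R cross3 v w + (p0 \<bullet> v) *\<^sub>R cross3 w u + (p0 \<bullet> w) *\<^sub>R cross3 u v)"
    unfolding T_def triple_ident ..
  also have "\<dots> \<le> norm ((p0 \<bullet> u) *\<^sub>R cross3 v w) + norm ((p0 \<bullet> v) *\<^sub>R cross3 w u) + norm ((p0 \<bullet> w) *\<^sub>R cross3 u v)"
    by (rule order_trans[OF norm_triangle_ineq add_right_mono[OF norm_triangle_ineq]])
  also have "\<dots> = \<bar>p0 \<bullet> u\<bar> * norm (cross3 v w) + \<bar>p0 \<bullet> v\<bar> * norm (cross3 w u) + \<bar>p0 \<bullet> w\<bar> * norm (cross3 u v)"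
    by simp
  also have "\<dots> \<le> 3 * (r^2/2 * (r*r))" using t1 t2 t3 by linarith
  also have "\<dots> = 3 * r^4 / 2" by (simp add: eval_nat_numeral)
  also have "\<dots> < R" using big by simp
  finally have "\<bar>T\<bar> < 1" using R0 by simp
  with \<open>T \<in> \<int>\<close> have "T = 0" by (metis Ints_nonzero_abs_less1)
  thus ?thesis unfolding T_def u_v_w_def .
qed

lemma NC:
  fixes n n' x :: "real^3"
  assumes "norm n = R" "norm n' = R" "norm x = R" "n \<noteq> n'" "n \<noteq> x" "n' \<noteq> x"
  shows "cross3 (n' - n) (x - n) \<noteq> 0"
proof
  assume "cross3 (n' - n) (x - n) = 0"
  hence "collinear {0, n' - n, x - n}" by (simp add: cross_eq_0)
  moreover have "n' - n \<noteq> 0" "x - n \<noteq> 0" using assms by auto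
  ultimately obtain t where t: "x - n = t *\<^sub>R (n' - n)" by (auto simp: collinear_lemma)
  define u where "u = n' - n"
  have h1: "n \<bullet> u = (- ((norm u)^2))/2" using dot_half[OF assms(1,2)] u_def by simp
  have h2: "n \<bullet> (t *\<^sub>R u) = (- ((norm (t *\<^sub>R u))^2))/2" using dot_half[OF assms(1,3)] t u_def by simp
  have "t * (n \<bullet> u) = (- (t^2 * (norm u)^2))/2" using h2 by (simp add: power_mult_distrib)
  hence "t * (norm u)^2 = t^2 * (norm u)^2" using h1 by (simp add: algebra_simps)
  moreover have "norm u \<noteq> 0" using \<open>n' - n \<noteq> 0\<close> u_def by simp
  ultimately have "t = t^2" by simp
  hence "t = 0 \<or> t = 1" by (simp add: power2_eq_square)
  thus False using t assms by auto
qed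

lemma PL:
  fixes u v w N :: "real^3"
  assumes "cross3 u v \<noteq> 0" "N \<bullet> u = 0" "N \<bullet> v = 0" "w \<bullet> cross3 u v = 0"
  shows "N \<bullet> w = 0"
proof -
  have "N \<bullet> ((cross3 u v \<bullet> cross3 u v) *\<^sub>R w) = 0"
    unfolding gram_ident using assms by (simp add: inner_add_right)
  thus ?thesis using assms(1) by simp
qed

lemma ortho_ex: fixes u :: "real^3" shows "\<exists>N. N \<noteq> 0 \<and> N \<bullet> u = 0"
proof (cases "u$2 = 0 \<and> u$3 = 0")
  case True
  thus ?thesis by (intro exI[of _ "axis 2 1"]) (simp add: inner_axis')
next
  case False
  thus ?thesis by (intro exI[of _ "vector [0, u$3, - u$2]"]) (auto simp: vec_eq_iff forall_3 inner_vec_def sum_3 vector_def)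
qed

theorem lemma9p2:
  shows "\<exists>R0::real. \<forall>R::real. R \<ge> R0 \<longrightarrow> R\<^sup>2 \<in> \<int> \<longrightarrow>
           (\<forall>m \<in> sphere_lattice R. \<exists>P :: (real^3) set.
               affine P \<and> aff_dim P = 2 \<and> component R m \<subseteq> P)"
proof -
  define R0 :: real where "R0 = 400^5"
  have key: "3 * (4 * R powr (1/5))^4 < 2*R \<and> R > 0" if "R \<ge> R0" for R
  proof -
    have Rpos: "R > 0" using that R0_def by simp
    define D where "D = R powr (1/5)"
    have D0: "D > 0" using Rpos D_def by simp
    have "D^5 = D powr (real 5)" using D0 by (simp add: powr_realpow)
    also have "\<dots> = R" unfolding D_def using Rpos by (simp add: powr_powr)
    finally have D5: "D^5 = R" .
    have "D \<ge> 400"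
    proof (rule ccontr)
      assume "\<not> D \<ge> 400"
      hence "D^5 < 400^5" using D0 by (intro power_strict_mono) auto
      thus False using D5 that R0_def by simp
    qed
    have p4: "D^4 > 0" using D0 by simp
    have e1: "3*(4*D)^4 = 768 * D^4" by (simp add: power_mult_distrib)
    have e2: "768 * D^4 < (2*D) * D^4" using \<open>D \<ge> 400\<close> p4 by (intro mult_strict_right_mono) auto
    have e3: "(2*D) * D^4 = 2 * D^5" by (simp add: power_Suc[symmetric] del: power_Suc)
    have "3*(4*D)^4 < 2*R" using e1 e2 e3 D5 by linarith
    hence "3*(4*R powr (1/5))^4 < 2*R" unfolding D_def .
    thus ?thesis using Rpos by blast
  qed
  show ?thesis
  proof (intro exI[of _ R0] allI impI ballI)
    fix R m assume RR: "R \<ge> R0" "R\<^sup>2 \<in> \<int>" and mR: "m \<in> sphere_lattice R"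
    define D where "D = R powr (1/5)"
    have big: "3*(4*D)^4 < 2*R" and Rpos: "R > 0" using key[OF RR(1)] D_def by auto
    have D0: "D > 0" using Rpos D_def by simp
    define S where "S = {x \<in> sphere_lattice R. norm (x - m) < 2*D}"
    have mS: "m \<in> S" using mR D0 S_def by simp
    have dist4: "norm (b - a) < 4*D" if "a \<in> S" "b \<in> S" for a b
    proof -
      have "norm (b - a) \<le> norm (b - m) + norm (a - m)"
        using norm_triangle_ineq4[of "b-m" "a-m"] by simp
      thus ?thesis using that S_def by auto
    qed
    have Kloc: "(b-a) \<bullet> cross3 (c-a) (x-a) = 0" if "a\<in>S" "b\<in>S" "c\<in>S" "x\<in>S" for a b c x
      by (rule K[where r="4*D"]) (use that S_def dist4 big in auto)
    have normS: "norm x = R" if "x \<in> sphere_lattice R" for x using that sphere_lattice_def by auto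
    obtain N \<beta> where N0: "N \<noteq> 0" and NS: "\<forall>x\<in>S. N \<bullet> x = \<beta>"
    proof (cases "\<exists>a\<in>S. \<exists>b\<in>S. \<exists>c\<in>S. a\<noteq>b \<and> a\<noteq>c \<and> b\<noteq>c")
      case True
      then obtain a b c where abc: "a\<in>S" "b\<in>S" "c\<in>S" "a\<noteq>b" "a\<noteq>c" "b\<noteq>c" by blast
      define N where "N = cross3 (b-a) (c-a)"
      have "N \<noteq> 0" unfolding N_def using abc by (intro NC[where R=R]) (auto simp: S_def normS)
      moreover have "\<forall>x\<in>S. N \<bullet> x = N \<bullet> a"
      proof
        fix x assume "x \<in> S"
        have "(x - a) \<bullet> N = 0" using Kloc[OF abc(1-3) \<open>x\<in>S\<close>] cyc[of "b-a" "c-a" "x-a"] N_def by simp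
        thus "N \<bullet> x = N \<bullet> a" by (simp add: inner_diff inner_commute)
      qed
      ultimately show ?thesis by (rule that)
    next
      case False
      show ?thesis
      proof (cases "S \<subseteq> {m}")
        case True
        obtain N :: "real^3" where "N \<noteq> 0" using ortho_ex[of 0] by blast
        thus ?thesis using True by (intro that[of N "N \<bullet> m"]) auto
      next
        case False2: False
        then obtain a where a: "a \<in> S" "a \<noteq> m" by blast
        have Sma: "x = m \<or> x = a" if "x \<in> S" for x using False mS a that by blast
        obtain N where N: "N \<noteq> 0" "N \<bullet> (a - m) = 0" using ortho_ex by blast
        have "N \<bullet> a = N \<bullet> m" using N(2) by (simp add: inner_diff)
        thus ?thesis using Sma N(1) by (intro that[of N "N \<bullet> m"]) auto
      qed
    qed
    define P where "P = {y. N \<bullet> y = \<beta>}"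
    have cg: "x \<in> sphere_lattice R \<and> y \<in> sphere_lattice R \<and> x \<noteq> y \<and> norm (y - x) < D"
      if "close_graph R x y" for x y
      using that unfolding close_graph_def D_def by (auto simp: norm_minus_commute)
    have inv: "n \<in> P \<and> (\<forall>x. close_graph R n x \<longrightarrow> x \<in> P) \<and>
               (\<forall>x z. close_graph R n x \<longrightarrow> close_graph R x z \<longrightarrow> z \<in> P)"
      if "(close_graph R)\<^sup>*\<^sup>* m n" for n
      using that
    proof (induction rule: rtranclp_induct)
      case base
      have "m \<in> P" using mS NS P_def by auto
      moreover have "x \<in> P" if "close_graph R m x" for x
        using cg[OF that] D0 NS P_def S_def by auto
      moreover have "z \<in> P" if "close_graph R m x" "close_graph R x z" for x z
      proof -
        have "norm (z - m) \<le> norm (z - x) + norm (x - m)"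
          using norm_triangle_ineq[of "z-x" "x-m"] by simp
        thus ?thesis using cg[OF that(1)] cg[OF that(2)] NS P_def S_def by auto
      qed
      ultimately show ?case by blast
    next
      case (step n n')
      have n'P: "n' \<in> P" using step by blast
      moreover have "x \<in> P" if "close_graph R n' x" for x using step that by blast
      moreover have "z \<in> P" if xz: "close_graph R n' x" "close_graph R x z" for x z
      proof (cases "x = n")
        case True
        thus ?thesis using step xz by blast
      next
        case False
        have nP: "n \<in> P" and xP: "x \<in> P" using step xz by blast+
        have c1: "n \<in> sphere_lattice R" "n' \<in> sphere_lattice R" "n \<noteq> n'" "norm (n' - n) < D"
          using cg[OF step(2)] by auto
        have c2: "x \<in> sphere_lattice R" "n' \<noteq> x" "norm (x - n') < D" using cg[OF xz(1)] by auto
        have c3: "z \<in> sphere_lattice R" "norm (z - x) < D" using cg[OF xz(2)] by auto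
        have e2: "norm (x - n) < 4*D"
          using norm_triangle_ineq[of "x-n'" "n'-n"] c1 c2 D0 by simp
        have e3: "norm (z - n) < 4*D"
          using norm_triangle_ineq[of "z-x" "x-n'"] norm_triangle_ineq[of "z-n'" "n'-n"] c1 c2 c3 D0 by simp
        have "(n' - n) \<bullet> cross3 (x - n) (z - n) = 0"
          by (rule K[where r="4*D"]) (use c1 c2 c3 e2 e3 big D0 in auto)
        hence w: "(z - n) \<bullet> cross3 (n' - n) (x - n) = 0" using cyc[of "n'-n" "x-n" "z-n"] by simp
        have nz: "cross3 (n' - n) (x - n) \<noteq> 0"
          by (rule NC[where R=R]) (use c1 c2 False normS in auto)
        have "N \<bullet> (z - n) = 0"
          by (rule PL[OF nz _ _ w]) (use nP n'P xP P_def in \<open>auto simp: inner_diff\<close>)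
        thus ?thesis using nP P_def by (simp add: inner_diff)
      qed
      ultimately show ?case by blast
    qed
    show "\<exists>P. affine P \<and> aff_dim P = 2 \<and> component R m \<subseteq> P"
    proof (intro exI[of _ P] conjI)
      show "affine P" unfolding P_def by (rule affine_hyperplane)
      show "aff_dim P = 2" unfolding P_def using N0 by simp
      show "component R m \<subseteq> P" using inv unfolding component_def by blast
    qed
  qed
qed

end
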